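(* Let $(E,A)$ satisfy the standing assumptions below and set $p:=p_{\mathrm{res}}^{(E,A)}+1$. If $E(X_{\operatorname{ran}})$ is closed and $X_{\operatorname{ran}} \cap \ker R_r(\mu)^p = \{0\}$, then $E\colon X_{\operatorname{ran}} \to Z_{\operatorname{ran}}$ is boundedly invertible.
   Context: Standing assumptions: $X$, $Z$ complex Banach spaces; $E\in L(X,Z)$; $A\colon\mathrm{dom}(A)\subseteq X\to Z$ closed and densely defined; $(E,A)$ has a complex resolvent index $p_{\mathrm{res}}^{(E,A)}$, i.e.~the smallest $n\in\mathbb N_0$ such that for some $\omega\in\mathbb R$, $C>0$, $\mathbb C_{\operatorname{Re}>\omega}\subseteq\rho(E,A)$ and $\Vert(\lambda E-A)^{-1}\Vert\le C|\lambda|^{n-1}$ for all $\lambda\in\mathbb C_{\operatorname{Re}>\omega}$. $\mu\in\rho(E,A)$, $R_r(\lambda)=(\lambda E-A)^{-1}E$, $R_l(\lambda)=E(\lambda E-A)^{-1}$, $X_{\operatorname{ran}}=\overline{\operatorname{ran}R_r(\mu)^p}$, $Z_{\operatorname{ran}}=\overline{\operatorname{ran}R_l(\mu)^p}$ (closures of ranges). *)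

theory Defs
  imports "HOL-Analysis.Analysis"
begin

text \<open>A complex Banach space is modelled as a (real) Banach space type together with
  a complex scalar multiplication extending the real one and compatible with the norm.\<close>

definition complex_scaling :: "(complex \<Rightarrow> 'a::banach \<Rightarrow> 'a) \<Rightarrow> bool" where
  "complex_scaling s \<longleftrightarrow>
     (\<forall>r x. s (complex_of_real r) x = r *\<^sub>R x) \<and>
     (\<forall>a b x. s (a + b) x = s a x + s b x) \<and>
     (\<forall>a x y. s a (x + y) = s a x + s a y) \<and>
     (\<forall>a b x. s (a * b) x = s a (s b x)) \<and>
     (\<forall>a x. norm (s a x) = cmod a * norm x)"

definition bounded_clinear_op ::
  "(complex \<Rightarrow> 'a::banach \<Rightarrow> 'a) \<Rightarrow> (complex \<Rightarrow> 'b::banach \<Rightarrow> 'b) \<Rightarrow> ('a \<Rightarrow> 'b) \<Rightarrow> bool" where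
  "bounded_clinear_op sX sZ E \<longleftrightarrow> bounded_linear E \<and> (\<forall>c x. E (sX c x) = sZ c (E x))"

definition closed_densely_defined ::
  "(complex \<Rightarrow> 'a::banach \<Rightarrow> 'a) \<Rightarrow> (complex \<Rightarrow> 'b::banach \<Rightarrow> 'b) \<Rightarrow> 'a set \<Rightarrow> ('a \<Rightarrow> 'b) \<Rightarrow> bool" where
  "closed_densely_defined sX sZ D A \<longleftrightarrow>
     0 \<in> D \<and> (\<forall>x\<in>D. \<forall>y\<in>D. x + y \<in> D) \<and> (\<forall>c. \<forall>x\<in>D. sX c x \<in> D) \<and>
     (\<forall>x\<in>D. \<forall>y\<in>D. A (x + y) = A x + A y) \<and> (\<forall>c. \<forall>x\<in>D. A (sX c x) = sZ c (A x)) \<and>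
     closed {(x, A x) | x. x \<in> D} \<and>
     closure D = UNIV"

definition pencil ::
  "(complex \<Rightarrow> 'b \<Rightarrow> 'b::banach) \<Rightarrow> ('a \<Rightarrow> 'b) \<Rightarrow> ('a \<Rightarrow> 'b) \<Rightarrow> complex \<Rightarrow> 'a \<Rightarrow> 'b" where
  "pencil sZ E A l x = sZ l (E x) - A x"

definition in_resolvent_set ::
  "(complex \<Rightarrow> 'b \<Rightarrow> 'b::banach) \<Rightarrow> ('a::banach \<Rightarrow> 'b) \<Rightarrow> 'a set \<Rightarrow> ('a \<Rightarrow> 'b) \<Rightarrow> complex \<Rightarrow> bool" where
  "in_resolvent_set sZ E D A l \<longleftrightarrow>
     bij_betw (pencil sZ E A l) D UNIV \<and>
     (\<exists>K. \<forall>z. norm (inv_into D (pencil sZ E A l) z) \<le> K * norm z)"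

definition resolvent ::
  "(complex \<Rightarrow> 'b \<Rightarrow> 'b::banach) \<Rightarrow> ('a::banach \<Rightarrow> 'b) \<Rightarrow> 'a set \<Rightarrow> ('a \<Rightarrow> 'b) \<Rightarrow> complex \<Rightarrow> 'b \<Rightarrow> 'a" where
  "resolvent sZ E D A l = inv_into D (pencil sZ E A l)"

text \<open>(E,A) satisfies the resolvent growth bound with exponent n.
  (Since \<omega> may always be enlarged, the convention 0 powr a = 0 at \<lambda> = 0 is irrelevant.)\<close>
definition has_resolvent_index ::
  "(complex \<Rightarrow> 'b \<Rightarrow> 'b::banach) \<Rightarrow> ('a::banach \<Rightarrow> 'b) \<Rightarrow> 'a set \<Rightarrow> ('a \<Rightarrow> 'b) \<Rightarrow> nat \<Rightarrow> bool" where
  "has_resolvent_index sZ E D A n \<longleftrightarrow>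
     (\<exists>\<omega>::real. \<exists>C>0. \<forall>l. Re l > \<omega> \<longrightarrow>
        in_resolvent_set sZ E D A l \<and>
        onorm (resolvent sZ E D A l) \<le> C * cmod l powr (real n - 1))"

definition p_res ::
  "(complex \<Rightarrow> 'b \<Rightarrow> 'b::banach) \<Rightarrow> ('a::banach \<Rightarrow> 'b) \<Rightarrow> 'a set \<Rightarrow> ('a \<Rightarrow> 'b) \<Rightarrow> nat" where
  "p_res sZ E D A = (LEAST n. has_resolvent_index sZ E D A n)"

definition R_r ::
  "(complex \<Rightarrow> 'b \<Rightarrow> 'b::banach) \<Rightarrow> ('a::banach \<Rightarrow> 'b) \<Rightarrow> 'a set \<Rightarrow> ('a \<Rightarrow> 'b) \<Rightarrow> complex \<Rightarrow> 'a \<Rightarrow> 'a" where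
  "R_r sZ E D A l = resolvent sZ E D A l \<circ> E"

definition R_l ::
  "(complex \<Rightarrow> 'b \<Rightarrow> 'b::banach) \<Rightarrow> ('a::banach \<Rightarrow> 'b) \<Rightarrow> 'a set \<Rightarrow> ('a \<Rightarrow> 'b) \<Rightarrow> complex \<Rightarrow> 'b \<Rightarrow> 'b" where
  "R_l sZ E D A l = E \<circ> resolvent sZ E D A l"

end

theory Submission
  imports Defs "HOL-Real_Asymp.Real_Asymp"
begin

lemma cs_props:
  assumes "complex_scaling s"
  shows "s (complex_of_real r) x = r *\<^sub>R x" "s (a+b) x = s a x + s b x" "s a (x+y) = s a x + s a y"
   "s (a*b) x = s a (s b x)" "norm (s a x) = cmod a * norm x"
  using assms unfolding complex_scaling_def by auto

lemma cs_zero: assumes "complex_scaling s" shows "s a 0 = 0"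
  using cs_props(3)[OF assms, of a 0 0] by simp

lemma cs_diff: assumes "complex_scaling s" shows "s a (x - y) = s a x - s a y"
  using cs_props(3)[OF assms, of a "x-y" y] by (simp add: algebra_simps)

lemma cs_one: assumes "complex_scaling s" shows "s 1 x = x"
  using cs_props(1)[OF assms, of 1 x] by simp

lemma cs_sdiff: assumes "complex_scaling s" shows "s (a - b) x = s a x - s b x"
  using cs_props(2)[OF assms, of "a-b" b x] by (simp add: algebra_simps)

lemma cs_cancel: assumes "complex_scaling s" "c \<noteq> 0" shows "s (inverse c) (s c x) = x"
  using cs_props(4)[OF assms(1), of "inverse c" c x] assms cs_one[OF assms(1)] by simp

lemma cs_neg: assumes "complex_scaling s" shows "s (- a) x = - s a x"
  using cs_sdiff[OF assms, of 0 a x] cs_props(1)[OF assms, of 0 x] by simp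

locale dae =
  fixes sX :: "complex \<Rightarrow> 'x::banach \<Rightarrow> 'x" and sZ :: "complex \<Rightarrow> 'z::banach \<Rightarrow> 'z"
    and E :: "'x \<Rightarrow> 'z" and D :: "'x set" and A :: "'x \<Rightarrow> 'z"
  assumes csX: "complex_scaling sX" and csZ: "complex_scaling sZ"
    and Eop: "bounded_clinear_op sX sZ E"
    and Acdd: "closed_densely_defined sX sZ D A"
begin

abbreviation "P l \<equiv> pencil sZ E A l"
abbreviation "R l \<equiv> resolvent sZ E D A l"
abbreviation "rs l \<equiv> in_resolvent_set sZ E D A l"

lemma E_bl: "bounded_linear E" and E_sc: "E (sX c x) = sZ c (E x)"
  using Eop unfolding bounded_clinear_op_def by auto

lemma E_add: "E (x + y) = E x + E y"
  using E_bl by (simp add: linear_simps)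

lemma D0: "0 \<in> D" and Dadd: "x \<in> D \<Longrightarrow> y \<in> D \<Longrightarrow> x + y \<in> D"
  and Dsc: "x \<in> D \<Longrightarrow> sX c x \<in> D"
  and Aadd: "x \<in> D \<Longrightarrow> y \<in> D \<Longrightarrow> A (x + y) = A x + A y"
  and Asc: "x \<in> D \<Longrightarrow> A (sX c x) = sZ c (A x)"
  using Acdd unfolding closed_densely_defined_def by auto

lemma P_add: "x \<in> D \<Longrightarrow> y \<in> D \<Longrightarrow> P l (x + y) = P l x + P l y"
  unfolding pencil_def using Aadd E_add cs_props(3)[OF csZ] by (simp add: algebra_simps)

lemma P_sc: "x \<in> D \<Longrightarrow> P l (sX c x) = sZ c (P l x)"
proof -
  assume x: "x \<in> D"
  have "sZ l (sZ c (E x)) = sZ c (sZ l (E x))"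
    using cs_props(4)[OF csZ, of l c] cs_props(4)[OF csZ, of c l] by (simp add: mult.commute)
  then show ?thesis unfolding pencil_def using x Asc E_sc cs_diff[OF csZ] by simp
qed

lemma R_in_D: "rs l \<Longrightarrow> R l z \<in> D"
  unfolding in_resolvent_set_def resolvent_def bij_betw_def by (auto intro: inv_into_into)

lemma P_R: "rs l \<Longrightarrow> P l (R l z) = z"
  unfolding in_resolvent_set_def resolvent_def bij_betw_def by (auto intro: f_inv_into_f)

lemma R_P: "rs l \<Longrightarrow> x \<in> D \<Longrightarrow> R l (P l x) = x"
  unfolding in_resolvent_set_def resolvent_def bij_betw_def by (auto intro: inv_into_f_f)

lemma R_add: assumes "rs l" shows "R l (z1 + z2) = R l z1 + R l z2"
proof -
  have "R l (z1 + z2) = R l (P l (R l z1 + R l z2))"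
    using P_add R_in_D P_R assms by simp
  also have "\<dots> = R l z1 + R l z2" using R_P Dadd R_in_D assms by simp
  finally show ?thesis .
qed

lemma R_sc: assumes "rs l" shows "R l (sZ c z) = sX c (R l z)"
proof -
  have "R l (sZ c z) = R l (P l (sX c (R l z)))"
    using P_sc R_in_D P_R assms by simp
  also have "\<dots> = sX c (R l z)" using R_P Dsc R_in_D assms by simp
  finally show ?thesis .
qed

lemma R_bl: assumes "rs l" shows "bounded_linear (R l)"
proof -
  obtain K where K: "\<And>z. norm (R l z) \<le> K * norm z"
    using assms unfolding in_resolvent_set_def resolvent_def by blast
  show ?thesis
  proof (rule bounded_linear_intro)
    show "R l (x + y) = R l x + R l y" for x y using R_add assms by simp
    show "R l (r *\<^sub>R x) = r *\<^sub>R R l x" for r x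
      using R_sc[OF assms, of "complex_of_real r" x] cs_props(1)[OF csX] cs_props(1)[OF csZ] by simp
    show "norm (R l x) \<le> norm x * K" for x using K[of x] by (simp add: mult.commute)
  qed
qed

lemma R_zero: "rs l \<Longrightarrow> R l 0 = 0"
  using R_bl linear_0 bounded_linear.linear by blast

lemma RI: assumes l: "rs l" and m: "rs m"
  shows "sX (l - m) (R l (E (R m v))) = R m v - R l v"
proof -
  define y where "y = R m v"
  have y: "y \<in> D" using R_in_D m y_def by simp
  have v: "v = sZ m (E y) - A y" using P_R[OF m, of v] unfolding y_def pencil_def by simp
  have "P l y = sZ (l - m) (E y) + v"
    unfolding pencil_def v cs_sdiff[OF csZ] by simp
  then have "y = R l (sZ (l - m) (E y) + v)" using R_P[OF l y] by simp
  also have "\<dots> = sX (l - m) (R l (E y)) + R l v" using R_add[OF l] R_sc[OF l] by simp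
  finally show ?thesis unfolding y_def by (simp add: algebra_simps)
qed

lemma R_comm: assumes l: "rs l" and m: "rs m" and lm: "l \<noteq> m"
  shows "R l (E (R m v)) = R m (E (R l v))"
proof -
  have 1: "sX (l - m) (R l (E (R m v))) = R m v - R l v" using RI[OF l m] .
  have "sX (m - l) (R m (E (R l v))) = R l v - R m v" using RI[OF m l] .
  then have 2: "sX (l - m) (R m (E (R l v))) = R m v - R l v"
    using cs_neg[OF csX, of "m - l"] by (metis minus_diff_eq minus_equation_iff)
  have "l - m \<noteq> 0" using lm by simp
  then show ?thesis using 1 2 cs_cancel[OF csX] by metis
qed

end

context dae begin

lemma R_comm_pow: assumes l: "rs l" and m: "rs m" and lm: "l \<noteq> m"
  shows "R l (((E \<circ> R m) ^^ k) z) = ((R m \<circ> E) ^^ k) (R l z)"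
proof (induction k)
  case 0 then show ?case by simp
next
  case (Suc k)
  have "R l (((E \<circ> R m) ^^ Suc k) z) = R l (E (R m (((E \<circ> R m) ^^ k) z)))" by simp
  also have "\<dots> = R m (E (R l (((E \<circ> R m) ^^ k) z)))" using R_comm[OF l m lm] .
  also have "\<dots> = ((R m \<circ> E) ^^ Suc k) (R l z)" using Suc.IH by (simp add: o_def)
  finally show ?case .
qed

lemma growth_limit:
  assumes hr: "has_resolvent_index sZ E D A q" and m: "rs m"
  shows "(\<lambda>n. R (of_nat n) (((E \<circ> R m) ^^ q) z)) \<longlonglongrightarrow> 0"
proof -
  obtain \<omega> C where C: "C > 0" and hC: "\<And>l. Re l > \<omega> \<Longrightarrow> rs l \<and> onorm (R l) \<le> C * cmod l powr (real q - 1)"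
    using hr unfolding has_resolvent_index_def by blast
  obtain N :: nat where N: "real N > max \<omega> (2 * cmod m + 1)" using reals_Archimedean2 by blast
  define d where "d n = complex_of_nat n - m" for n
  have evN: "\<forall>\<^sub>F n in sequentially. n \<ge> N" by (rule eventually_ge_at_top)
  have good: "rs (of_nat n) \<and> onorm (R (of_nat n)) \<le> C * real n powr (real q - 1)
      \<and> cmod (d n) \<ge> real n / 2 \<and> real n > 0" if "n \<ge> N" for n
  proof -
    have rn: "real n \<ge> real N" using that by simp
    have "Re (of_nat n) > \<omega>" using N rn by simp
    moreover have "cmod (d n) \<ge> real n - cmod m"
      unfolding d_def using norm_triangle_ineq2[of "of_nat n" m] by simp
    moreover have "real n > 0" using N rn norm_ge_zero[of m] by linarith
    ultimately show ?thesis using hC[of "of_nat n"] N rn by auto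
  qed
  have dtop: "filterlim (\<lambda>n. cmod (d n)) at_top sequentially"
  proof (rule filterlim_at_top_mono)
    show "filterlim (\<lambda>n. real n / 2) at_top sequentially" by real_asymp
    show "\<forall>\<^sub>F n in sequentially. real n / 2 \<le> cmod (d n)"
      using evN by eventually_elim (use good in auto)
  qed
  have inv0: "(\<lambda>n. c / cmod (d n) ^ j) \<longlonglongrightarrow> 0" if "j > 0" for c j
    by (rule tendsto_divide_0[OF tendsto_const])
       (rule filterlim_at_top_imp_at_infinity, rule filterlim_pow_at_top[OF that dtop])
  have claim: "k \<le> q \<Longrightarrow> (\<lambda>n. norm (R (of_nat n) (((E \<circ> R m) ^^ k) z)) / cmod (d n) ^ (q - k)) \<longlonglongrightarrow> 0" for k
  proof (induction k)
    case 0
    show ?case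
    proof (rule Lim_null_comparison)
      show "(\<lambda>n. C * norm z * 2 ^ q / real n) \<longlonglongrightarrow> 0"
        by real_asymp
      show "\<forall>\<^sub>F n in sequentially. norm (norm (R (of_nat n) (((E \<circ> R m) ^^ 0) z)) / cmod (d n) ^ (q - 0))
              \<le> C * norm z * 2 ^ q / real n"
        using evN
      proof eventually_elim
        case (elim n)
        from good[OF elim] have rs: "rs (of_nat n)" and on: "onorm (R (of_nat n)) \<le> C * real n powr (real q - 1)"
          and dn: "cmod (d n) \<ge> real n / 2" and np: "real n > 0" by auto
        have "norm (R (of_nat n) z) \<le> onorm (R (of_nat n)) * norm z"
          using onorm[OF R_bl[OF rs]] .
        also have "\<dots> \<le> C * real n powr (real q - 1) * norm z"
          using on by (simp add: mult_right_mono)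
        also have "real n powr (real q - 1) = real n ^ q / real n"
          using np by (simp add: powr_diff powr_realpow)
        finally have f0: "norm (R (of_nat n) z) \<le> C * (real n ^ q / real n) * norm z" .
        have dpos: "cmod (d n) ^ q \<ge> (real n / 2) ^ q" using dn np by (intro power_mono) auto
        have dq: "(real n / 2) ^ q > 0" using np by simp
        have "norm (R (of_nat n) z) / cmod (d n) ^ q \<le> C * (real n ^ q / real n) * norm z / (real n / 2) ^ q"
          using f0 dpos dq C np by (intro frac_le) (auto intro: mult_nonneg_nonneg divide_nonneg_pos)
        also have "\<dots> = C * norm z * 2 ^ q / real n"
          using np by (simp add: power_divide field_simps)
        finally show ?case by simp
      qed
    qed
  next
    case (Suc k)
    then have kq: "k < q" and IH: "(\<lambda>n. norm (R (of_nat n) (((E \<circ> R m) ^^ k) z)) / cmod (d n) ^ (q - k)) \<longlonglongrightarrow> 0"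
      by (auto simp: o_def)
    define v where "v = ((E \<circ> R m) ^^ k) z"
    show ?case
    proof (rule Lim_null_comparison)
      show "(\<lambda>n. norm (R m v) / cmod (d n) ^ (q - k) + norm (R (of_nat n) v) / cmod (d n) ^ (q - k)) \<longlonglongrightarrow> 0"
        using tendsto_add[OF inv0[of "q - k" "norm (R m v)"] IH] kq unfolding v_def by simp
      show "\<forall>\<^sub>F n in sequentially. norm (norm (R (of_nat n) (((E \<circ> R m) ^^ Suc k) z)) / cmod (d n) ^ (q - Suc k))
              \<le> norm (R m v) / cmod (d n) ^ (q - k) + norm (R (of_nat n) v) / cmod (d n) ^ (q - k)"
        using evN
      proof eventually_elim
        case (elim n)
        from good[OF elim] have rs: "rs (of_nat n)" and dn: "cmod (d n) \<ge> real n / 2" and np: "real n > 0" by auto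
        have dp: "cmod (d n) > 0" using dn np by linarith
        have "sX (d n) (R (of_nat n) (E (R m v))) = R m v - R (of_nat n) v"
          unfolding d_def using RI[OF rs m] .
        then have "cmod (d n) * norm (R (of_nat n) (E (R m v))) = norm (R m v - R (of_nat n) v)"
          using cs_props(5)[OF csX] by metis
        also have "\<dots> \<le> norm (R m v) + norm (R (of_nat n) v)" by (rule norm_triangle_ineq4)
        finally have ineq: "cmod (d n) * norm (R (of_nat n) (E (R m v))) \<le> norm (R m v) + norm (R (of_nat n) v)" .
        have qk: "q - k = Suc (q - Suc k)" using kq by simp
        have "norm (R (of_nat n) (E (R m v))) / cmod (d n) ^ (q - Suc k)
              = cmod (d n) * norm (R (of_nat n) (E (R m v))) / cmod (d n) ^ (q - k)"
          using dp qk by simp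
        also have "\<dots> \<le> (norm (R m v) + norm (R (of_nat n) v)) / cmod (d n) ^ (q - k)"
          using ineq dp by (simp add: divide_right_mono)
        finally show ?case unfolding v_def by (simp add: add_divide_distrib)
      qed
    qed
  qed
  from claim[of q] show ?thesis by (simp add: tendsto_norm_zero_iff)
qed

end

lemma subspace_closure_my:
  fixes S :: "'a::real_normed_vector set"
  assumes S: "subspace S" shows "subspace (closure S)"
proof -
  have 0: "0 \<in> closure S" using S subspace_0 closure_subset by blast
  have add: "x + y \<in> closure S" if xy: "x \<in> closure S" "y \<in> closure S" for x y
  proof -
    obtain f where f: "\<forall>n. f n \<in> S" "f \<longlonglongrightarrow> x" using xy(1) unfolding closure_sequential by blast
    obtain g where g: "\<forall>n. g n \<in> S" "g \<longlonglongrightarrow> y" using xy(2) unfolding closure_sequential by blast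
    have "\<forall>n. f n + g n \<in> S" using f g S subspace_add by blast
    moreover have "(\<lambda>n. f n + g n) \<longlonglongrightarrow> x + y" using f g tendsto_add by blast
    ultimately show ?thesis unfolding closure_sequential by (intro exI[of _ "\<lambda>n. f n + g n"]) simp
  qed
  have sc: "c *\<^sub>R x \<in> closure S" if xy: "x \<in> closure S" for c x
  proof -
    obtain f where f: "\<forall>n. f n \<in> S" "f \<longlonglongrightarrow> x" using xy(1) unfolding closure_sequential by blast
    have "\<forall>n. c *\<^sub>R f n \<in> S" using f S subspace_scale by blast
    moreover have "(\<lambda>n. c *\<^sub>R f n) \<longlonglongrightarrow> c *\<^sub>R x" using f tendsto_scaleR tendsto_const by blast
    ultimately show ?thesis unfolding closure_sequential by (intro exI[of _ "\<lambda>n. c *\<^sub>R f n"]) simp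
  qed
  show ?thesis unfolding subspace_def using 0 add sc by blast
qed

lemma open_mapping_inj:
  fixes T :: "'a::banach \<Rightarrow> 'b::banach"
  assumes T: "bounded_linear T" and S: "subspace S" and Sc: "closed S"
    and F: "closed (T ` S)" and inj: "inj_on T S"
  shows "\<exists>K. \<forall>x\<in>S. norm x \<le> K * norm (T x)"
proof -
  define F where "F = T ` S"
  have lin: "linear T" using T bounded_linear.linear by blast
  have Fsub: "subspace F" unfolding F_def using linear_subspace_image[OF lin S] .
  have Fcl: "closed F" using F F_def by simp
  define Cn where "Cn n = F \<inter> closure (T ` (S \<inter> cball 0 (real n)))" for n :: nat
  define X where "X = top_of_set F"
  have step1: "\<exists>n::nat. \<exists>y0 r. y0 \<in> F \<and> r > 0 \<and> F \<inter> ball y0 r \<subseteq> closure (T ` (S \<inter> cball 0 (real n)))"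
  proof (rule ccontr)
    assume neg: "\<not> ?thesis"
    have noint: "X interior_of Cn n = {}" for n
    proof (rule ccontr)
      assume "X interior_of Cn n \<noteq> {}"
      then obtain y0 where "y0 \<in> X interior_of Cn n" by blast
      then obtain U where U: "openin X U" "y0 \<in> U" "U \<subseteq> Cn n"
        unfolding interior_of_def by blast
      from U(1) obtain V where V: "open V" "U = F \<inter> V" unfolding X_def openin_open by blast
      have y0V: "y0 \<in> V" and y0F: "y0 \<in> F" using U(2) V(2) by auto
      obtain r where r: "r > 0" "ball y0 r \<subseteq> V" using open_contains_ball_eq[OF V(1)] y0V by blast
      have "F \<inter> ball y0 r \<subseteq> Cn n" using r(2) U(3) V(2) by blast
      then have "F \<inter> ball y0 r \<subseteq> closure (T ` (S \<inter> cball 0 (real n)))" unfolding Cn_def by blast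
      then show False using neg r(1) y0F by blast
    qed
    have cm: "completely_metrizable_space X"
      unfolding X_def by (rule completely_metrizable_space_closedin[OF completely_metrizable_space_euclidean])
        (simp add: closed_closedin[symmetric] Fcl)
    have cl: "closedin X (Cn n)" for n
      unfolding X_def Cn_def by (rule closedin_closed_Int) simp
    have "X interior_of \<Union> (range Cn) = {}"
    proof (rule Baire_category_alt)
      show "completely_metrizable_space X \<or> locally_compact_space X \<and> regular_space X" using cm by blast
      show "countable (range Cn)" by simp
      fix G assume "G \<in> range Cn"
      then obtain n where "G = Cn n" by blast
      then show "closedin X G \<and> X interior_of G = {}" using cl noint by simp
    qed
    moreover have "\<Union> (range Cn) = F"
    proof
      show "\<Union> (range Cn) \<subseteq> F"
      proof
        fix y assume "y \<in> \<Union> (range Cn)"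
        then obtain n where "y \<in> Cn n" by blast
        then show "y \<in> F" unfolding Cn_def by blast
      qed
      show "F \<subseteq> \<Union> (range Cn)"
      proof
        fix y assume yF: "y \<in> F"
        then obtain x where x: "x \<in> S" "y = T x" unfolding F_def by auto
        obtain n :: nat where nx: "norm x \<le> real n" using real_arch_simple[of "norm x"] by auto
        have "x \<in> S \<inter> cball 0 (real n)" using x nx by simp
        with x(2) have "y \<in> T ` (S \<inter> cball 0 (real n))" by (rule image_eqI)
        then have "y \<in> closure (T ` (S \<inter> cball 0 (real n)))" by (rule closure_subset[THEN subsetD])
        then have "y \<in> Cn n" using yF unfolding Cn_def by simp
        then show "y \<in> \<Union> (range Cn)" by blast
      qed
    qed
    moreover have "X interior_of F = F" using interior_of_topspace[of X] unfolding X_def by simp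
    moreover have "0 \<in> F" using Fsub subspace_0 by blast
    ultimately show False by simp
  qed
  then obtain n :: nat and y0 r where y0: "y0 \<in> F" and r: "r > 0"
    and ball: "F \<inter> ball y0 r \<subseteq> closure (T ` (S \<inter> cball 0 (real n)))" by blast
  have step2: "\<exists>x\<in>S. norm x \<le> 2 * real n \<and> norm (T x - y) < e"
    if y: "y \<in> F" "norm y < r" and e: "e > 0" for y e
  proof -
    have "y0 \<in> closure (T ` (S \<inter> cball 0 (real n)))" using ball y0 r by auto
    then have "\<forall>e>0. \<exists>u\<in>T ` (S \<inter> cball 0 (real n)). dist u y0 < e"
      unfolding closure_approachable .
    moreover have e2: "e / 2 > 0" using e by simp
    ultimately obtain u1 where u1: "u1 \<in> T ` (S \<inter> cball 0 (real n))" "dist u1 y0 < e / 2"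
      by blast
    have "y0 + y \<in> F" using Fsub y0 y subspace_add by blast
    moreover have "y0 + y \<in> ball y0 r" using y by (simp add: dist_norm)
    ultimately have "y0 + y \<in> closure (T ` (S \<inter> cball 0 (real n)))" using ball by blast
    then have "\<forall>e>0. \<exists>u\<in>T ` (S \<inter> cball 0 (real n)). dist u (y0 + y) < e"
      unfolding closure_approachable .
    then obtain u2 where u2: "u2 \<in> T ` (S \<inter> cball 0 (real n))" "dist u2 (y0 + y) < e / 2"
      using e2 by blast
    obtain x1 where x1: "x1 \<in> S" "norm x1 \<le> real n" "u1 = T x1" using u1 by auto
    obtain x2 where x2: "x2 \<in> S" "norm x2 \<le> real n" "u2 = T x2" using u2 by auto
    have A1: "x2 - x1 \<in> S" using S x1 x2 subspace_diff by blast
    have A2: "norm (x2 - x1) \<le> 2 * real n"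
      using norm_triangle_ineq4[of x2 x1] x1 x2 by linarith
    have eq: "T (x2 - x1) - y = (T x2 - (y0 + y)) - (T x1 - y0)"
      using linear_diff[OF lin] by (simp add: algebra_simps)
    have "norm (T (x2 - x1) - y) \<le> norm (T x2 - (y0 + y)) + norm (T x1 - y0)"
      unfolding eq by (rule norm_triangle_ineq4)
    moreover have "norm (T x2 - (y0 + y)) < e / 2" "norm (T x1 - y0) < e / 2"
      using u1 u2 x1 x2 by (auto simp: dist_norm)
    ultimately have "norm (T (x2 - x1) - y) < e" by linarith
    then show ?thesis using A1 A2 by blast
  qed
  define M where "M = 4 * real n / r"
  have M0: "M \<ge> 0" unfolding M_def using r by simp
  have step3: "\<exists>x\<in>S. norm x \<le> M * norm y \<and> norm (y - T x) \<le> e"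
    if y: "y \<in> F" and e: "e > 0" for y e
  proof (cases "y = 0")
    case True
    then show ?thesis using S subspace_0 linear_0[OF lin] e by force
  next
    case False
    define c where "c = r / (2 * norm y)"
    have c: "c > 0" using False r c_def by simp
    have y'F: "c *\<^sub>R y \<in> F" using Fsub y subspace_scale by blast
    have "norm (c *\<^sub>R y) = r / 2" using c False r unfolding c_def by simp
    then have "norm (c *\<^sub>R y) < r" using r by simp
    then obtain x' where x': "x' \<in> S" "norm x' \<le> 2 * real n" "norm (T x' - c *\<^sub>R y) < c * e"
      using step2[OF y'F _ mult_pos_pos[OF c e]] by blast
    define x where "x = (1 / c) *\<^sub>R x'"
    have "x \<in> S" using x' S subspace_scale x_def by blast
    moreover have "norm x \<le> M * norm y"
    proof -
      have "norm x = norm x' / c" using c x_def by simp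
      also have "\<dots> \<le> 2 * real n / c" using x' c by (simp add: divide_right_mono)
      also have "\<dots> = M * norm y" unfolding M_def c_def using False r by (simp add: field_simps)
      finally show ?thesis .
    qed
    moreover have "norm (y - T x) \<le> e"
    proof -
      have "y - T x = (1 / c) *\<^sub>R (c *\<^sub>R y - T x')"
        unfolding x_def using c linear_scale[OF lin] by (simp add: algebra_simps)
      then have "norm (y - T x) = norm (T x' - c *\<^sub>R y) / c"
        using c by (simp add: norm_minus_commute)
      also have "\<dots> \<le> e" using x' c by (simp add: divide_le_eq mult.commute)
      finally show ?thesis .
    qed
    ultimately show ?thesis by blast
  qed
  have step4: "\<exists>x\<in>S. T x = y \<and> norm x \<le> 2 * M * norm y" if y: "y \<in> F" for y
  proof (cases "y = 0")
    case True
    then show ?thesis using S subspace_0 linear_0[OF lin] by force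
  next
    case False
    then have ny: "norm y > 0" by simp
    define Pp where "Pp k u \<longleftrightarrow> u \<in> F \<and> norm u \<le> norm y / 2 ^ k \<and> (k = 0 \<longrightarrow> u = y)" for k u
    define Qq where "Qq (k::nat) u u' \<longleftrightarrow> (\<exists>x\<in>S. norm x \<le> M * norm u \<and> u' = u - T x)" for k u u'
    have "\<exists>f. \<forall>k. Pp k (f k) \<and> Qq k (f k) (f (Suc k))"
    proof (rule dependent_nat_choice)
      show "\<exists>x. Pp 0 x" using y unfolding Pp_def by auto
      fix u k assume "Pp k u"
      then have u: "u \<in> F" "norm u \<le> norm y / 2 ^ k" unfolding Pp_def by auto
      obtain x where x: "x \<in> S" "norm x \<le> M * norm u" "norm (u - T x) \<le> norm y / 2 ^ Suc k"
        using step3[OF u(1), of "norm y / 2 ^ Suc k"] ny by auto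
      have "T x \<in> F" using x F_def by blast
      then have "u - T x \<in> F" using Fsub u subspace_diff by blast
      then show "\<exists>u'. Pp (Suc k) u' \<and> Qq k u u'"
        using x unfolding Pp_def Qq_def by blast
    qed
    then obtain f where f: "\<And>k. Pp k (f k)" "\<And>k. Qq k (f k) (f (Suc k))" by blast
    have "\<forall>k. \<exists>x. x \<in> S \<and> norm x \<le> M * norm (f k) \<and> f (Suc k) = f k - T x"
      using f(2) unfolding Qq_def by blast
    from choice[OF this] obtain xs where xs0: "\<forall>k. xs k \<in> S \<and> norm (xs k) \<le> M * norm (f k) \<and> f (Suc k) = f k - T (xs k)"
      by blast
    then have xs: "\<And>k. xs k \<in> S" "\<And>k. norm (xs k) \<le> M * norm (f k)"
      "\<And>k. f (Suc k) = f k - T (xs k)" by auto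
    have f0: "f 0 = y" using f(1)[of 0] unfolding Pp_def by simp
    have fb: "norm (f k) \<le> norm y / 2 ^ k" for k using f(1)[of k] unfolding Pp_def by simp
    have xb: "norm (xs k) \<le> M * norm y * (1 / 2) ^ k" for k
    proof -
      have "norm (xs k) \<le> M * norm (f k)" by (rule xs(2))
      also have "\<dots> \<le> M * (norm y / 2 ^ k)" using fb[of k] M0 by (rule mult_left_mono)
      finally show ?thesis by (simp add: power_one_over)
    qed
    have geo: "summable (\<lambda>k. (1 / 2 :: real) ^ k)" by (rule summable_geometric) simp
    have gsum: "summable (\<lambda>k. M * norm y * (1 / 2) ^ k)" using summable_mult[OF geo] by simp
    have nsum: "summable (\<lambda>k. norm (xs k))"
      by (rule summable_comparison_test'[OF gsum]) (use xb in simp)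
    have xsum: "summable xs"
      by (rule summable_comparison_test'[OF gsum]) (use xb in simp)
    define x where "x = suminf xs"
    have xs_sums: "xs sums x" using xsum x_def summable_sums by blast
    have Tsums: "(\<lambda>k. T (xs k)) sums T x" using bounded_linear.sums[OF T xs_sums] .
    have part: "(\<Sum>k<m. T (xs k)) = y - f m" for m
      by (induction m) (auto simp: f0 xs(3) algebra_simps)
    have fto0: "f \<longlonglongrightarrow> 0"
    proof (rule Lim_null_comparison)
      show "\<forall>\<^sub>F k in sequentially. norm (f k) \<le> norm y / 2 ^ k" using fb by simp
      show "(\<lambda>k. norm y / 2 ^ k) \<longlonglongrightarrow> 0"
        by (intro tendsto_divide_0[OF tendsto_const] filterlim_realpow_sequentially_gt1) simp
    qed
    have "(\<lambda>m. \<Sum>k<m. T (xs k)) \<longlonglongrightarrow> y - 0"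
      unfolding part by (intro tendsto_diff tendsto_const fto0)
    moreover have "(\<lambda>m. \<Sum>k<m. T (xs k)) \<longlonglongrightarrow> T x" using Tsums sums_def by blast
    ultimately have Tx: "T x = y" using LIMSEQ_unique by fastforce
    have xS: "x \<in> S"
    proof (rule Lim_in_closed_set[OF Sc])
      show "\<forall>\<^sub>F m in sequentially. (\<Sum>k<m. xs k) \<in> S"
        by (intro always_eventually allI subspace_sum[OF S] xs(1))
      show "(\<lambda>m. \<Sum>k<m. xs k) \<longlonglongrightarrow> x" using xs_sums sums_def by blast
    qed simp
    have "norm x \<le> (\<Sum>k. norm (xs k))" unfolding x_def by (rule summable_norm[OF nsum])
    also have "\<dots> \<le> (\<Sum>k. M * norm y * (1 / 2) ^ k)" by (rule suminf_le[OF xb nsum gsum])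
    also have "\<dots> = M * norm y * (\<Sum>k. (1 / 2 :: real) ^ k)" by (rule suminf_mult[OF geo])
    also have "\<dots> = 2 * M * norm y" by (simp add: suminf_geometric)
    finally show ?thesis using Tx xS by blast
  qed
  show ?thesis
  proof (intro exI ballI)
    fix x assume x: "x \<in> S"
    have "T x \<in> F" using x F_def by blast
    then obtain x' where x': "x' \<in> S" "T x' = T x" "norm x' \<le> 2 * M * norm (T x)" using step4 by blast
    have "x' = x" using inj x x' inj_on_def by metis
    then show "norm x \<le> 2 * M * norm (T x)" using x' by simp
  qed
qed

lemma bl_funpow: fixes f :: "'a::real_normed_vector \<Rightarrow> 'a" assumes "bounded_linear f" shows "bounded_linear (f ^^ k)"
proof (induction k)
  case 0
  have "f ^^ 0 = (\<lambda>x. x)" by (rule ext) simp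
  then show ?case using bounded_linear_ident by metis
next
  case (Suc k)
  have "f ^^ Suc k = (\<lambda>x. f ((f ^^ k) x))" by auto
  then show ?case using bounded_linear_compose[OF assms Suc] by simp
qed

context dae begin

lemma RE_bl: "rs m \<Longrightarrow> bounded_linear (R m \<circ> E)"
  unfolding comp_def using bounded_linear_compose[OF R_bl E_bl] by blast

lemma closure_range_subspace: "rs m \<Longrightarrow> subspace (closure (range ((R m \<circ> E) ^^ k)))"
  by (intro subspace_closure_my linear_subspace_image subspace_UNIV bounded_linear.linear[OF bl_funpow[OF RE_bl]])

lemma in_closure_range:
  assumes hr: "has_resolvent_index sZ E D A q" and m: "rs m"
  shows "R m (((E \<circ> R m) ^^ q) z) \<in> closure (range ((R m \<circ> E) ^^ Suc q))"
proof -
  define Y where "Y = closure (range ((R m \<circ> E) ^^ Suc q))"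
  define v where "v = ((E \<circ> R m) ^^ q) z"
  define w where "w = R m v"
  define f where "f n = R (of_nat n) v" for n :: nat
  define b where "b n = R (of_nat n) (E w)" for n :: nat
  define d where "d n = complex_of_nat n - m" for n
  have f0: "f \<longlonglongrightarrow> 0" using growth_limit[OF hr m] unfolding f_def v_def .
  obtain \<omega> C where hC: "\<And>l. Re l > \<omega> \<Longrightarrow> rs l"
    using hr unfolding has_resolvent_index_def by blast
  obtain N :: nat where N: "real N > max \<omega> (cmod m + 1)" using reals_Archimedean2 by blast
  have evN: "\<forall>\<^sub>F n in sequentially. n \<ge> N" by (rule eventually_ge_at_top)
  have good: "rs (of_nat n) \<and> of_nat n \<noteq> m \<and> cmod (d n) \<ge> real n - cmod m" if "n \<ge> N" for n
  proof -
    have rn: "real n \<ge> real N" using that by simp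
    have "Re (of_nat n) > \<omega>" using N rn by simp
    moreover have dn: "cmod (d n) \<ge> real n - cmod m"
      unfolding d_def using norm_triangle_ineq2[of "of_nat n" m] by simp
    moreover have "of_nat n \<noteq> m"
    proof
      assume "of_nat n = m"
      then have "cmod m = real n" by (metis norm_of_nat)
      then show False using N rn by simp
    qed
    ultimately show ?thesis using hC[of "of_nat n"] by auto
  qed
  have dtop: "filterlim (\<lambda>n. cmod (d n)) at_top sequentially"
  proof (rule filterlim_at_top_mono)
    show "filterlim (\<lambda>n. real n - cmod m) at_top sequentially" by real_asymp
    show "\<forall>\<^sub>F n in sequentially. real n - cmod m \<le> cmod (d n)"
      using evN by eventually_elim (use good in auto)
  qed
  have Ysub: "subspace Y" unfolding Y_def using closure_range_subspace[OF m] .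
  have ident: "real n *\<^sub>R b n = w - f n + sX m (b n) \<and> b n \<in> Y" if "n \<ge> N" for n
  proof -
    from good[OF that] have rn: "rs (of_nat n)" and nm: "of_nat n \<noteq> m" by auto
    have RI': "sX (d n) (b n) = w - f n" unfolding b_def w_def f_def d_def using RI[OF rn m] .
    have "real n *\<^sub>R b n = sX (of_nat n) (b n)" using cs_props(1)[OF csX, of "real n"] by simp
    also have "\<dots> = sX (d n + m) (b n)" unfolding d_def by simp
    also have "\<dots> = w - f n + sX m (b n)" using cs_props(2)[OF csX] RI' by simp
    finally have 1: "real n *\<^sub>R b n = w - f n + sX m (b n)" .
    have "b n = R (of_nat n) (((E \<circ> R m) ^^ Suc q) z)" unfolding b_def w_def v_def by simp
    also have "\<dots> = ((R m \<circ> E) ^^ Suc q) (R (of_nat n) z)" by (rule R_comm_pow[OF rn m nm])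
    finally have "b n \<in> range ((R m \<circ> E) ^^ Suc q)" by blast
    then have "b n \<in> Y" unfolding Y_def by (rule closure_subset[THEN subsetD])
    then show ?thesis using 1 by simp
  qed
  have bto0: "b \<longlonglongrightarrow> 0"
  proof (rule Lim_null_comparison)
    show "\<forall>\<^sub>F n in sequentially. norm (b n) \<le> (norm w + norm (f n)) / cmod (d n)"
      using evN
    proof eventually_elim
      case (elim n)
      from good[OF elim] have rn: "rs (of_nat n)" and nm: "of_nat n \<noteq> m" by auto
      have dp: "cmod (d n) > 0" using nm unfolding d_def by simp
      have "sX (d n) (b n) = w - f n" unfolding b_def w_def f_def d_def using RI[OF rn m] .
      then have "cmod (d n) * norm (b n) = norm (w - f n)" using cs_props(5)[OF csX] by metis
      also have "\<dots> \<le> norm w + norm (f n)" by (rule norm_triangle_ineq4)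
      finally show ?case using dp by (simp add: field_simps)
    qed
    show "(\<lambda>n. (norm w + norm (f n)) / cmod (d n)) \<longlonglongrightarrow> 0"
      by (rule tendsto_divide_0[OF tendsto_add[OF tendsto_const tendsto_norm[OF f0]]])
         (rule filterlim_at_top_imp_at_infinity[OF dtop])
  qed
  have sb: "(\<lambda>n. sX m (b n)) \<longlonglongrightarrow> 0"
  proof (rule tendsto_norm_zero_cancel)
    have "(\<lambda>n. cmod m * norm (b n)) \<longlonglongrightarrow> cmod m * 0"
      by (intro tendsto_mult tendsto_const tendsto_norm_zero bto0)
    then show "(\<lambda>n. norm (sX m (b n))) \<longlonglongrightarrow> 0" using cs_props(5)[OF csX] by simp
  qed
  have lim: "(\<lambda>n. w - f n + sX m (b n)) \<longlonglongrightarrow> w - 0 + 0"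
    by (intro tendsto_add tendsto_diff tendsto_const f0 sb)
  have "(\<lambda>n. real n *\<^sub>R b n) \<longlonglongrightarrow> w"
  proof (rule Lim_transform_eventually[OF lim[simplified]])
    show "\<forall>\<^sub>F n in sequentially. w - f n + sX m (b n) = real n *\<^sub>R b n"
      using evN by eventually_elim (use ident in simp)
  qed
  moreover have "\<forall>\<^sub>F n in sequentially. real n *\<^sub>R b n \<in> Y"
    using evN
  proof eventually_elim
    case (elim n)
    have "b n \<in> Y" using ident[OF elim] by simp
    then show ?case by (rule subspace_scale[OF Ysub])
  qed
  moreover have "closed Y" unfolding Y_def by simp
  ultimately have "w \<in> Y"
    using Lim_in_closed_set[of Y "\<lambda>n. real n *\<^sub>R b n" sequentially w] by simp
  then show ?thesis unfolding Y_def w_def v_def .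
qed

end

theorem proposition3p8:
  fixes sX :: "complex \<Rightarrow> 'x::banach \<Rightarrow> 'x"
    and sZ :: "complex \<Rightarrow> 'z::banach \<Rightarrow> 'z"
    and E :: "'x \<Rightarrow> 'z" and D :: "'x set" and A :: "'x \<Rightarrow> 'z" and \<mu> :: complex
  assumes "complex_scaling sX" and "complex_scaling sZ"
    and "bounded_clinear_op sX sZ E"
    and "closed_densely_defined sX sZ D A"
    and "\<exists>n. has_resolvent_index sZ E D A n"
    and "in_resolvent_set sZ E D A \<mu>"
    and "p = p_res sZ E D A + 1"
    and "Xran = closure (range (R_r sZ E D A \<mu> ^^ p))"
    and "Zran = closure (range (R_l sZ E D A \<mu> ^^ p))"
    and "closed (E ` Xran)"
    and "Xran \<inter> {x. (R_r sZ E D A \<mu> ^^ p) x = 0} = {0}"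
  shows "E ` Xran = Zran \<and> inj_on E Xran \<and>
         (\<exists>K. \<forall>z\<in>Zran. norm (inv_into Xran E z) \<le> K * norm z)"
proof -
  interpret dae sX sZ E D A using assms(1-4) by unfold_locales
  define q where "q = p_res sZ E D A"
  have hq: "has_resolvent_index sZ E D A q"
    using assms(5) unfolding q_def p_res_def by (rule LeastI_ex)
  have p: "p = Suc q" using assms(7) q_def by simp
  have m: "rs \<mu>" by (rule assms(6))
  define M where "M = R \<mu>"
  have RR: "R_r sZ E D A \<mu> = M \<circ> E" unfolding R_r_def M_def ..
  have RL: "R_l sZ E D A \<mu> = E \<circ> M" unfolding R_l_def M_def ..
  have X: "Xran = closure (range ((M \<circ> E) ^^ Suc q))" using assms(8) RR p by simp
  have Z: "Zran = closure (range ((E \<circ> M) ^^ Suc q))" using assms(9) RL p by simp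
  have Xsub: "subspace Xran" unfolding X M_def by (rule closure_range_subspace[OF m])
  have Xcl: "closed Xran" unfolding X by simp
  have comm: "E (((M \<circ> E) ^^ k) x) = ((E \<circ> M) ^^ k) (E x)" for k x
    by (induction k) auto
  have sub1: "E ` Xran \<subseteq> Zran"
    unfolding X
  proof (rule image_closure_subset)
    show "continuous_on (closure (range ((M \<circ> E) ^^ Suc q))) E"
      by (rule linear_continuous_on[OF E_bl])
    show "closed Zran" unfolding Z by simp
    show "E ` range ((M \<circ> E) ^^ Suc q) \<subseteq> Zran"
    proof
      fix y assume "y \<in> E ` range ((M \<circ> E) ^^ Suc q)"
      then obtain x where "y = E (((M \<circ> E) ^^ Suc q) x)" by blast
      then have "y = ((E \<circ> M) ^^ Suc q) (E x)" using comm by simp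
      then have "y \<in> range ((E \<circ> M) ^^ Suc q)" by (rule range_eqI)
      then show "y \<in> Zran" unfolding Z by (rule closure_subset[THEN subsetD])
    qed
  qed
  have sub2: "Zran \<subseteq> E ` Xran"
    unfolding Z
  proof (rule closure_minimal[OF _ assms(10)])
    show "range ((E \<circ> M) ^^ Suc q) \<subseteq> E ` Xran"
    proof
      fix y assume "y \<in> range ((E \<circ> M) ^^ Suc q)"
      then obtain z where z: "y = ((E \<circ> M) ^^ Suc q) z" by blast
      have "M (((E \<circ> M) ^^ q) z) \<in> Xran"
        unfolding X M_def by (rule in_closure_range[OF hq m])
      moreover have "y = E (M (((E \<circ> M) ^^ q) z))" using z by simp
      ultimately show "y \<in> E ` Xran" by blast
    qed
  qed
  have Mbl: "bounded_linear (M \<circ> E)" unfolding M_def by (rule RE_bl[OF m])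
  have inj: "inj_on E Xran"
  proof (rule inj_onI)
    fix x y assume x: "x \<in> Xran" and y: "y \<in> Xran" and eq: "E x = E y"
    have xy: "x - y \<in> Xran" using Xsub x y subspace_diff by blast
    have "E (x - y) = 0" using eq linear_diff[OF bounded_linear.linear[OF E_bl]] by simp
    then have "(M \<circ> E) (x - y) = 0" unfolding M_def using R_zero[OF m] by simp
    then have "((M \<circ> E) ^^ Suc q) (x - y) = ((M \<circ> E) ^^ q) 0" by (simp add: funpow_Suc_right del: funpow.simps)
    also have "\<dots> = 0" using linear_0[OF bounded_linear.linear[OF bl_funpow[OF Mbl]]] .
    finally have "(R_r sZ E D A \<mu> ^^ p) (x - y) = 0" using RR p by simp
    then have "x - y \<in> Xran \<inter> {x. (R_r sZ E D A \<mu> ^^ p) x = 0}" using xy by blast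
    then show "x = y" using assms(11) by simp
  qed
  obtain K where K: "\<And>x. x \<in> Xran \<Longrightarrow> norm x \<le> K * norm (E x)"
    using open_mapping_inj[OF E_bl Xsub Xcl assms(10) inj] by blast
  have bound: "\<forall>z\<in>Zran. norm (inv_into Xran E z) \<le> K * norm z"
  proof
    fix z assume "z \<in> Zran"
    then have zi: "z \<in> E ` Xran" using sub2 by blast
    have "inv_into Xran E z \<in> Xran" using zi by (rule inv_into_into)
    moreover have "E (inv_into Xran E z) = z" using zi by (rule f_inv_into_f)
    ultimately show "norm (inv_into Xran E z) \<le> K * norm z" using K[of "inv_into Xran E z"] by simp
  qed
  show ?thesis by (intro conjI equalityI sub1 sub2 inj exI[of _ K] bound)
qed

end
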